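(* Let $\mathcal G$ be a strongly connected directed graph with no self loops, vertex set $\mathcal V=\{1,\dots,n\}$ and edge set $\mathcal E=\{1,\dots,m\}$. Let $B=S-D$ be its incidence matrix, let $Q=DB^\mathsf{T}$, and let $W$ and $Q^\ddagger$ be as in the context. Let $\omega^{\mathrm u}\in\mathbb{R}^n$ be constant. Consider the dynamics \[ \dot{\tilde\theta}(t)=\omega^{\mathrm u}+c(t),\qquad \tilde\beta(t)=B^\mathsf{T}\tilde\theta(t),\qquad y(t)=D\tilde\beta(t). \] Let $\mathcal T$ be an outward directed spanning tree with root $r$, and let $g_1,\dots,g_{n-1}$ be an ordering of its edges such that $g_a\prec g_b$ implies $a<b$. Let $k,k_2>0$. Let $0<t_1<\dots<t_n$ satisfy $t_{j+1}-t_j>|\tilde\beta_{g_j}(t_j)|/k_2$ for each $j$. For each $i\neq r$, let $j(i)$ be the unique index with $\mathrm{dst}(g_{j(i)})=i$. Let the control be \[ c_i(t)=\begin{cases} k\,y_i(t) & t<t_1,\\ k\,y_i(t_1)+k_2\,\mathrm{sign}\big(\tilde\beta_{g_{j(i)}}(t)\big) & i\neq r,\ t_{j(i)}\le t<t_{j(i)+1},\\ k\,y_i(t_1) & \text{otherwise.}\end{cases} \] Assume \[ \tilde\beta(t_1)=-k^{-1}B^\mathsf{T}Q^\ddagger\omega^{\mathrm u} \qquad\text{and}\qquad \omega^{\mathrm u}+k\,y(t_1)=W\omega^{\mathrm u}. \] Then for all $j=1,\dots,n-1$, \[ \tilde\beta(t_{j+1})=(I+B^\mathsf{T}DE^{g_j})\,\tilde\beta(t_j)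 \qquad\text{and}\qquad \tilde\beta_{g_j}(t_{j+1})=0. \]
   Context: The matrices $S,D\in\mathbb{R}^{n\times m}$ are defined by $S_{ie}=1$ if node $i$ is the source of edge $e$ and $0$ otherwise, and $D_{ie}=1$ if node $i$ is the destination of edge $e$ and $0$ otherwise. The vector $\mathbf{1}$ is the all-ones vector. The matrix $Q=DB^\mathsf{T}$ is an irreducible rate matrix. Let $z>0$ satisfy $z^\mathsf{T}Q=0$ and $\mathbf{1}^\mathsf{T}z=1$, and set $W=\mathbf{1}z^\mathsf{T}$. Write $Q=T\begin{bmatrix}0&0\\0&\Lambda\end{bmatrix}T^{-1}$, where $T$ is invertible with first column $\mathbf{1}$, the first row of $T^{-1}$ is $z^\mathsf{T}$, and $\Lambda$ is invertible. Define $Q^\ddagger=T\begin{bmatrix}0&0\\0&\Lambda^{-1}\end{bmatrix}T^{-1}$. An outward directed spanning tree with root $r$ is a set $\mathcal T$ of $n-1$ edges such that every vertex is reachable from $r$ by a directed path in $\mathcal T$, and each vertex other than $r$ is the destination of exactly one edge of $\mathcal T$. For $f,g\in\mathcal T$, $f\prec g$ means there is a directed walk of nonzero length in $\mathcal T$ from $\mathrm{dst}(f)$ to $\mathrm{dst}(g)$. $E^g\in\mathbb{R}^{m\times m}$ is zero except $E^g_{gg}=1$. The convention $\mathrm{sign}(0)=0$ is used. *)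

theory Defs
  imports "HOL-Analysis.Analysis" "Jordan_Normal_Form.Matrix"
begin

text \<open>Graph with nodes 0..n-1 and edges 0..m-1, given by source and destination maps.\<close>

definition incS :: "nat \<Rightarrow> nat \<Rightarrow> (nat \<Rightarrow> nat) \<Rightarrow> real mat" where
  "incS n m src = mat n m (\<lambda>(i,e). if src e = i then 1 else 0)"

definition incD :: "nat \<Rightarrow> nat \<Rightarrow> (nat \<Rightarrow> nat) \<Rightarrow> real mat" where
  "incD n m dst = mat n m (\<lambda>(i,e). if dst e = i then 1 else 0)"

definition incB :: "nat \<Rightarrow> nat \<Rightarrow> (nat \<Rightarrow> nat) \<Rightarrow> (nat \<Rightarrow> nat) \<Rightarrow> real mat" where
  "incB n m src dst = incS n m src - incD n m dst"

definition rateQ :: "nat \<Rightarrow> nat \<Rightarrow> (nat \<Rightarrow> nat) \<Rightarrow> (nat \<Rightarrow> nat) \<Rightarrow> real mat" where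
  "rateQ n m src dst = incD n m dst * transpose_mat (incB n m src dst)"

definition Emat :: "nat \<Rightarrow> nat \<Rightarrow> real mat" where
  "Emat m g = mat m m (\<lambda>(a,b). if a = g \<and> b = g then 1 else 0)"

definition edge_rel :: "nat \<Rightarrow> (nat \<Rightarrow> nat) \<Rightarrow> (nat \<Rightarrow> nat) \<Rightarrow> nat set \<Rightarrow> (nat \<times> nat) set" where
  "edge_rel m src dst F = {(src e, dst e) | e. e \<in> F \<and> e < m}"

definition strongly_connected :: "nat \<Rightarrow> nat \<Rightarrow> (nat \<Rightarrow> nat) \<Rightarrow> (nat \<Rightarrow> nat) \<Rightarrow> bool" where
  "strongly_connected n m src dst \<longleftrightarrow>
     (\<forall>u<n. \<forall>v<n. (u, v) \<in> (edge_rel m src dst {0..<m})\<^sup>*)"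

definition outward_spanning_tree ::
  "nat \<Rightarrow> nat \<Rightarrow> (nat \<Rightarrow> nat) \<Rightarrow> (nat \<Rightarrow> nat) \<Rightarrow> nat \<Rightarrow> nat set \<Rightarrow> bool" where
  "outward_spanning_tree n m src dst r Tr \<longleftrightarrow>
     r < n \<and> Tr \<subseteq> {0..<m} \<and> card Tr = n - 1 \<and>
     (\<forall>v<n. (r, v) \<in> (edge_rel m src dst Tr)\<^sup>*) \<and>
     (\<forall>v<n. v \<noteq> r \<longrightarrow> (\<exists>!e. e \<in> Tr \<and> dst e = v))"

definition tree_prec :: "nat \<Rightarrow> (nat \<Rightarrow> nat) \<Rightarrow> (nat \<Rightarrow> nat) \<Rightarrow> nat set \<Rightarrow> nat \<Rightarrow> nat \<Rightarrow> bool" where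
  "tree_prec m src dst Tr f g \<longleftrightarrow> (dst f, dst g) \<in> (edge_rel m src dst Tr)\<^sup>+"

text \<open>Q^\<ddagger> as in the context: Q = T diag(0,\<Lambda>) T^{-1}, Qd = T diag(0,\<Lambda>^{-1}) T^{-1}.\<close>
definition is_Qdagger :: "nat \<Rightarrow> real mat \<Rightarrow> real vec \<Rightarrow> real mat \<Rightarrow> bool" where
  "is_Qdagger n Q z Qd \<longleftrightarrow>
    (\<exists>T Ti L Li. T \<in> carrier_mat n n \<and> Ti \<in> carrier_mat n n \<and>
       T * Ti = 1\<^sub>m n \<and> Ti * T = 1\<^sub>m n \<and>
       col T 0 = vec n (\<lambda>_. 1) \<and> row Ti 0 = z \<and>
       L \<in> carrier_mat (n-1) (n-1) \<and> Li \<in> carrier_mat (n-1) (n-1) \<and>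
       L * Li = 1\<^sub>m (n-1) \<and> Li * L = 1\<^sub>m (n-1) \<and>
       Q = T * four_block_mat (0\<^sub>m 1 1) (0\<^sub>m 1 (n-1)) (0\<^sub>m (n-1) 1) L * Ti \<and>
       Qd = T * four_block_mat (0\<^sub>m 1 1) (0\<^sub>m 1 (n-1)) (0\<^sub>m (n-1) 1) Li * Ti)"

definition Wmat :: "nat \<Rightarrow> real vec \<Rightarrow> real mat" where
  "Wmat n z = mat n n (\<lambda>(i,j). z $ j)"

definition jidx :: "nat \<Rightarrow> (nat \<Rightarrow> nat) \<Rightarrow> (nat \<Rightarrow> nat) \<Rightarrow> nat \<Rightarrow> nat" where
  "jidx n dst g i = (THE j. j \<in> {1..<n} \<and> dst (g j) = i)"

end

theory Submission
  imports Defs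
begin

lemma const_int: fixes a b c :: real assumes "a \<le> b"
  shows "((\<lambda>x. c) has_integral (c * (b - a))) {a..b}"
  using has_integral_const_real[of c a b] assms by (simp add: mult.commute)

lemma sgn_ode_not_pos:
  fixes b :: "real \<Rightarrow> real" and k2 T0 T :: real
  assumes k2: "k2 > 0" and T: "T0 < T" and gap: "\<bar>b T0\<bar> < k2 * (T - T0)"
    and I: "\<And>s s'. T0 \<le> s \<Longrightarrow> s \<le> s' \<Longrightarrow> s' \<le> T \<Longrightarrow>
        ((\<lambda>\<tau>. k2 * sgn (b \<tau>)) has_integral (b s - b s')) {s..s'}"
  shows "\<not> b T > 0"
proof
  assume bT: "b T > 0"
  have lip: "\<bar>b s - b s'\<bar> \<le> k2 * (s' - s)" if "T0 \<le> s" "s \<le> s'" "s' \<le> T" for s s'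
  proof -
    have "b s - b s' \<le> k2 * (s' - s)"
      by (rule has_integral_le[OF I[OF that] const_int[OF that(2)]]) (auto simp: sgn_real_def less_imp_le[OF k2])
    moreover have "- k2 * (s' - s) \<le> b s - b s'"
      by (rule has_integral_le[OF const_int[OF that(2)] I[OF that]]) (auto simp: sgn_real_def less_imp_le[OF k2])
    ultimately show ?thesis by linarith
  qed
  have cont: "continuous_on {T0..T} b"
  proof (rule lipschitz_on_continuous_on)
    show "k2-lipschitz_on {T0..T} b"
    proof (rule lipschitz_onI)
      fix x y assume "x \<in> {T0..T}" "y \<in> {T0..T}"
      then show "dist (b x) (b y) \<le> k2 * dist x y"
        using lip[of x y] lip[of y x] by (cases "x \<le> y") (auto simp: dist_real_def abs_minus_commute)
    qed (use k2 in auto)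
  qed
  define S where "S = {T0..T} \<inter> b -` {..0}"
  show False
  proof (cases "S = {}")
    case True
    have "((\<lambda>\<tau>. k2 * sgn (b \<tau>)) has_integral (k2 * (T - T0))) {T0..T}"
    proof (rule has_integral_spike_finite[of "{}"])
      show "((\<lambda>x. k2) has_integral k2 * (T - T0)) {T0..T}" using const_int T by simp
    next
      fix x assume "x \<in> {T0..T} - {}"
      then have "x \<in> {T0..T}" by simp
      then have "b x > 0" using True unfolding S_def by (metis IntI empty_iff not_less vimageI2 atMost_iff)
      then show "k2 * sgn (b x) = k2" by simp
    qed auto
    then have "b T0 - b T = k2 * (T - T0)"
      using has_integral_unique[OF I[of T0 T, OF order_refl less_imp_le[OF T] order_refl]] by blast
    then show False using gap bT by linarith
  next
    case False
    have cl: "closed S" unfolding S_def by (rule continuous_closed_preimage[OF cont]) auto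
    have bdd: "bdd_above S" unfolding S_def by (auto intro: bdd_aboveI[of _ T])
    define \<sigma> where "\<sigma> = Sup S"
    have sS: "\<sigma> \<in> S" unfolding \<sigma>_def by (rule closed_contains_Sup[OF False bdd cl])
    then have s1: "T0 \<le> \<sigma>" "\<sigma> \<le> T" "b \<sigma> \<le> 0" unfolding S_def by auto
    have "\<sigma> \<noteq> T" using s1 bT by auto
    have "((\<lambda>\<tau>. k2 * sgn (b \<tau>)) has_integral (k2 * (T - \<sigma>))) {\<sigma>..T}"
    proof (rule has_integral_spike_finite[of "{\<sigma>}"])
      show "((\<lambda>x. k2) has_integral k2 * (T - \<sigma>)) {\<sigma>..T}" using const_int s1 by simp
    next
      fix x assume x: "x \<in> {\<sigma>..T} - {\<sigma>}"
      have "b x > 0"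
      proof (rule ccontr)
        assume "\<not> b x > 0"
        then have "x \<in> S" using x s1 unfolding S_def by auto
        then have "x \<le> \<sigma>" unfolding \<sigma>_def using bdd by (rule cSup_upper)
        then show False using x by auto
      qed
      then show "k2 * sgn (b x) = k2" by simp
    qed auto
    then have "b \<sigma> - b T = k2 * (T - \<sigma>)"
      using has_integral_unique[OF I[of \<sigma> T, OF s1(1) s1(2) order_refl]] by blast
    then show False using s1 bT k2 \<open>\<sigma> \<noteq> T\<close> by (smt (verit) mult_pos_pos)
  qed
qed

lemma sgn_ode_zero:
  fixes b :: "real \<Rightarrow> real" and k2 T0 T :: real
  assumes k2: "k2 > 0" and T: "T0 < T" and gap: "\<bar>b T0\<bar> < k2 * (T - T0)"
    and I: "\<And>s s'. T0 \<le> s \<Longrightarrow> s \<le> s' \<Longrightarrow> s' \<le> T \<Longrightarrow>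
        ((\<lambda>\<tau>. k2 * sgn (b \<tau>)) has_integral (b s - b s')) {s..s'}"
  shows "b T = 0"
proof -
  have "\<not> b T > 0" by (rule sgn_ode_not_pos[OF k2 T gap I])
  moreover have "\<not> (- b T) > 0"
  proof (rule sgn_ode_not_pos[of k2 T0 T "\<lambda>x. - b x", OF k2 T])
    show "\<bar>- b T0\<bar> < k2 * (T - T0)" using gap by simp
  next
    fix s s' assume "T0 \<le> s" "s \<le> s'" "s' \<le> T"
    from has_integral_neg[OF I[OF this]]
    show "((\<lambda>\<tau>. k2 * sgn (- b \<tau>)) has_integral (- b s - - b s')) {s..s'}" by simp
  qed
  ultimately show ?thesis by linarith
qed

lemma incB_carrier: "incB n m src dst \<in> carrier_mat n m"
  unfolding incB_def incS_def incD_def by auto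

lemma incD_carrier: "incD n m dst \<in> carrier_mat n m"
  unfolding incD_def by auto

lemma incB_index: "p < n \<Longrightarrow> e < m \<Longrightarrow> incB n m src dst $$ (p, e) =
   (if src e = p then 1 else 0) - (if dst e = p then 1 else 0)"
  unfolding incB_def incS_def incD_def by auto

lemma Bt_apply:
  assumes x: "x \<in> carrier_vec n" and e: "e < m" and s: "src e < n" and d: "dst e < n"
  shows "(transpose_mat (incB n m src dst) *\<^sub>v x) $ e = x $ src e - x $ dst e"
proof -
  have "(transpose_mat (incB n m src dst) *\<^sub>v x) $ e = (\<Sum>p\<in>{0..<n}. incB n m src dst $$ (p, e) * x $ p)"
    using incB_carrier[of n m src dst] x e
    by (auto simp: scalar_prod_def col_def mult.commute)
  also have "\<dots> = (\<Sum>p\<in>{0..<n}. (if src e = p then x $ p else 0) - (if dst e = p then x $ p else 0))"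
    by (rule sum.cong) (auto simp: incB_index e)
  also have "\<dots> = x $ src e - x $ dst e"
    using s d by (simp add: sum_subtractf)
  finally show ?thesis .
qed

lemma step_apply:
  assumes v: "v \<in> carrier_vec m" and e: "e < m" and g: "g < m"
    and s: "src e < n" and d: "dst e < n" and dg: "dst g < n"
  shows "((1\<^sub>m m + transpose_mat (incB n m src dst) * incD n m dst * Emat m g) *\<^sub>v v) $ e
     = v $ e + (if src e = dst g then v $ g else 0) - (if dst e = dst g then v $ g else 0)"
proof -
  have Ec: "Emat m g \<in> carrier_mat m m" unfolding Emat_def by auto
  have Bc: "transpose_mat (incB n m src dst) \<in> carrier_mat m n" using incB_carrier by auto
  have Dc: "incD n m dst \<in> carrier_mat n m" by (rule incD_carrier)
  have Ev: "Emat m g *\<^sub>v v = vec m (\<lambda>a. if a = g then v $ g else 0)"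
  proof (rule eq_vecI)
    fix a assume "a < dim_vec (vec m (\<lambda>a. if a = g then v $ g else 0))"
    then have a: "a < m" by simp
    have "(Emat m g *\<^sub>v v) $ a = (\<Sum>b\<in>{0..<m}. (if a = g \<and> b = g then 1 else 0) * v $ b)"
      using a v unfolding Emat_def by (auto simp: scalar_prod_def row_def)
    also have "\<dots> = (\<Sum>b\<in>{0..<m}. if b = g then (if a = g then v $ b else 0) else 0)"
      by (rule sum.cong) auto
    also have "\<dots> = (if a = g then v $ g else 0)" using g by (simp add: sum.delta)
    finally show "(Emat m g *\<^sub>v v) $ a = vec m (\<lambda>a. if a = g then v $ g else 0) $ a" using a by simp
  qed (use Ec in auto)
  have DEv: "incD n m dst *\<^sub>v (Emat m g *\<^sub>v v) = vec n (\<lambda>p. if dst g = p then v $ g else 0)"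
  proof (rule eq_vecI)
    fix p assume "p < dim_vec (vec n (\<lambda>p. if dst g = p then v $ g else 0))"
    then have p: "p < n" by simp
    have "(incD n m dst *\<^sub>v (Emat m g *\<^sub>v v)) $ p = (\<Sum>a\<in>{0..<m}. (if dst a = p then 1 else 0) * (if a = g then v $ g else 0))"
      using p unfolding Ev incD_def by (auto simp: scalar_prod_def row_def)
    also have "\<dots> = (\<Sum>a\<in>{0..<m}. if a = g then (if dst g = p then v $ g else 0) else 0)"
      by (rule sum.cong) auto
    also have "\<dots> = (if dst g = p then v $ g else 0)" using g by (simp add: sum.delta)
    finally show "(incD n m dst *\<^sub>v (Emat m g *\<^sub>v v)) $ p = vec n (\<lambda>p. if dst g = p then v $ g else 0) $ p"
      using p by simp
  qed (use Dc in auto)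
  have "(1\<^sub>m m + transpose_mat (incB n m src dst) * incD n m dst * Emat m g) *\<^sub>v v
     = v + transpose_mat (incB n m src dst) *\<^sub>v (incD n m dst *\<^sub>v (Emat m g *\<^sub>v v))"
  proof -
    have M: "transpose_mat (incB n m src dst) * incD n m dst * Emat m g \<in> carrier_mat m m"
      using Ec Bc Dc by auto
    have "(1\<^sub>m m + transpose_mat (incB n m src dst) * incD n m dst * Emat m g) *\<^sub>v v
        = 1\<^sub>m m *\<^sub>v v + (transpose_mat (incB n m src dst) * incD n m dst * Emat m g) *\<^sub>v v"
      by (rule add_mult_distrib_mat_vec[OF one_carrier_mat M v])
    also have "(transpose_mat (incB n m src dst) * incD n m dst * Emat m g) *\<^sub>v v
        = (transpose_mat (incB n m src dst) * incD n m dst) *\<^sub>v (Emat m g *\<^sub>v v)"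
      using Ec Bc Dc v by (meson assoc_mult_mat_vec mult_carrier_mat)
    also have "\<dots> = transpose_mat (incB n m src dst) *\<^sub>v (incD n m dst *\<^sub>v (Emat m g *\<^sub>v v))"
      using Ec Bc Dc v by (meson assoc_mult_mat_vec mult_mat_vec_carrier)
    finally show ?thesis using v by simp
  qed
  then have "((1\<^sub>m m + transpose_mat (incB n m src dst) * incD n m dst * Emat m g) *\<^sub>v v) $ e
     = v $ e + (transpose_mat (incB n m src dst) *\<^sub>v vec n (\<lambda>p. if dst g = p then v $ g else 0)) $ e"
    using e Bc v by (simp add: DEv)
  also have "\<dots> = v $ e + ((if dst g = src e then v $ g else 0) - (if dst g = dst e then v $ g else 0))"
    using Bt_apply[of "vec n (\<lambda>p. if dst g = p then v $ g else 0)" n e m src dst] e s d by simp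
  finally show ?thesis by auto
qed

lemma t_mono:
  assumes "\<forall>j\<in>{1..<n}. t j < (t (Suc j) :: real)" "1 \<le> a" "a < b" "b \<le> n"
  shows "t a < t b"
  using assms(3,4)
proof (induction b)
  case 0 then show ?case by simp
next
  case (Suc b)
  show ?case
  proof (cases "a = b")
    case True then show ?thesis using assms(1,2) Suc by auto
  next
    case False then have "t a < t b" using Suc by auto
    moreover have "t b < t (Suc b)" using assms(1,2) Suc False by auto
    ultimately show ?thesis by simp
  qed
qed

theorem lemma2:
  fixes n m :: nat and src dst :: "nat \<Rightarrow> nat" and r :: nat and Tr :: "nat set"
    and g :: "nat \<Rightarrow> nat" and t :: "nat \<Rightarrow> real" and k k2 :: real
    and \<omega> z :: "real vec" and Qd :: "real mat"
    and \<theta> :: "real \<Rightarrow> real vec" and c :: "real \<Rightarrow> nat \<Rightarrow> real"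
    and \<beta> y :: "real \<Rightarrow> real vec"
  assumes edges: "\<forall>e<m. src e < n \<and> dst e < n \<and> src e \<noteq> dst e"
    and sc: "strongly_connected n m src dst"
    and z_pos: "z \<in> carrier_vec n" "\<forall>i<n. z $ i > 0"
    and z_stat: "transpose_mat (rateQ n m src dst) *\<^sub>v z = 0\<^sub>v n"
    and z_sum: "(\<Sum>i<n. z $ i) = 1"
    and Qd: "is_Qdagger n (rateQ n m src dst) z Qd"
    and \<omega>: "\<omega> \<in> carrier_vec n"
    and tree: "outward_spanning_tree n m src dst r Tr"
    and g_bij: "bij_betw g {1..<n} Tr"
    and g_ord: "\<forall>a\<in>{1..<n}. \<forall>b\<in>{1..<n}. tree_prec m src dst Tr (g a) (g b) \<longrightarrow> a < b"
    and k: "k > 0" and k2: "k2 > 0"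
    and t_pos: "0 < t 1" and t_inc: "\<forall>j\<in>{1..<n}. t j < t (Suc j)"
    and \<theta>_dim: "\<forall>\<tau>. \<theta> \<tau> \<in> carrier_vec n"
    and \<beta>_def: "\<forall>\<tau>. \<beta> \<tau> = transpose_mat (incB n m src dst) *\<^sub>v \<theta> \<tau>"
    and y_def: "\<forall>\<tau>. y \<tau> = incD n m dst *\<^sub>v \<beta> \<tau>"
    and c_def: "\<forall>\<tau>. \<forall>i<n. c \<tau> i =
        (if \<tau> < t 1 then k * (y \<tau> $ i)
         else if i \<noteq> r \<and> t (jidx n dst g i) \<le> \<tau> \<and> \<tau> < t (Suc (jidx n dst g i))
           then k * (y (t 1) $ i) + k2 * sgn (\<beta> \<tau> $ g (jidx n dst g i))
         else k * (y (t 1) $ i))"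
    and dyn: "\<forall>s s'. 0 \<le> s \<and> s \<le> s' \<longrightarrow>
        (\<forall>i<n. ((\<lambda>\<tau>. \<omega> $ i + c \<tau> i) has_integral (\<theta> s' $ i - \<theta> s $ i)) {s..s'})"
    and gap: "\<forall>j\<in>{1..<n}. t (Suc j) - t j > \<bar>\<beta> (t j) $ g j\<bar> / k2"
    and init_\<beta>: "\<beta> (t 1) = (- (1 / k)) \<cdot>\<^sub>v ((transpose_mat (incB n m src dst) * Qd) *\<^sub>v \<omega>)"
    and init_y: "\<omega> + k \<cdot>\<^sub>v y (t 1) = Wmat n z *\<^sub>v \<omega>"
  shows "\<forall>j\<in>{1..<n}.
     \<beta> (t (Suc j)) = (1\<^sub>m m + transpose_mat (incB n m src dst) * incD n m dst * Emat m (g j)) *\<^sub>v \<beta> (t j)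
     \<and> \<beta> (t (Suc j)) $ g j = 0"
proof
  fix j assume j: "j \<in> {1..<n}"
  let ?rel = "edge_rel m src dst Tr"
  have r: "r < n" and Trm: "Tr \<subseteq> {0..<m}" and reach: "\<forall>v<n. (r, v) \<in> ?rel\<^sup>*"
    and uniq: "\<forall>v<n. v \<noteq> r \<longrightarrow> (\<exists>!e. e \<in> Tr \<and> dst e = v)"
    using tree unfolding outward_spanning_tree_def by auto
  have gTr: "g a \<in> Tr" if "a \<in> {1..<n}" for a using g_bij that by (auto simp: bij_betw_def)
  have gm: "g a < m" if "a \<in> {1..<n}" for a using gTr[OF that] Trm by auto
  have ginj: "inj_on g {1..<n}" using g_bij by (auto simp: bij_betw_def)
  have notr: "dst (g a) \<noteq> r" if a: "a \<in> {1..<n}" for a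
  proof
    assume d: "dst (g a) = r"
    have "src (g a) < n" using edges gm[OF a] by auto
    then have "(r, src (g a)) \<in> ?rel\<^sup>*" using reach by auto
    moreover have "(src (g a), dst (g a)) \<in> ?rel"
      unfolding edge_rel_def using gTr[OF a] gm[OF a] by auto
    ultimately have "(r, dst (g a)) \<in> ?rel\<^sup>+" by (rule rtrancl_into_trancl1)
    then have "tree_prec m src dst Tr (g a) (g a)" unfolding tree_prec_def d by simp
    then show False using g_ord a by (meson less_irrefl)
  qed
  have J1: "jidx n dst g (dst (g a)) = a" if a: "a \<in> {1..<n}" for a
    unfolding jidx_def
  proof (rule the_equality)
    fix a' assume a': "a' \<in> {1..<n} \<and> dst (g a') = dst (g a)"
    have "dst (g a) < n" using edges gm[OF a] by auto
    then have "g a' = g a" using uniq notr[OF a] gTr[OF a] gTr a' by metis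
    then show "a' = a" using ginj a a' by (auto dest: inj_onD)
  qed (use a in auto)
  have J2: "jidx n dst g p \<in> {1..<n} \<and> dst (g (jidx n dst g p)) = p" if p: "p < n" "p \<noteq> r" for p
  proof -
    obtain e where e: "e \<in> Tr" "dst e = p" using uniq p by blast
    then obtain a where a: "a \<in> {1..<n}" "g a = e" using g_bij by (auto simp: bij_betw_def)
    show ?thesis using J1[OF a(1)] a e by simp
  qed
  define e0 where "e0 = g j"
  define i where "i = dst e0"
  define s0 where "s0 = src e0"
  define T0 where "T0 = t j"
  define T where "T = t (Suc j)"
  define w where "w = (\<Sum>l<n. z $ l * \<omega> $ l)"
  define b where "b = (\<lambda>\<tau>. \<beta> \<tau> $ e0)"
  have e0m: "e0 < m" using gm j e0_def by auto
  have i_n: "i < n" and s0n: "s0 < n" and is0: "i \<noteq> s0" using edges e0m i_def s0_def by auto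
  have ir: "i \<noteq> r" using notr j i_def e0_def by auto
  have ji: "jidx n dst g i = j" using J1 j i_def e0_def by auto
  have TT: "T0 < T" using t_inc j T0_def T_def by auto
  have t1T0: "t 1 \<le> T0"
  proof (cases "j = 1")
    case False
    then have "1 < j" using j by auto
    then show ?thesis using t_mono[OF t_inc, of 1 j] j unfolding T0_def by auto
  qed (simp add: T0_def)
  have bdim: "\<beta> \<tau> \<in> carrier_vec m" for \<tau>
  proof -
    have "\<beta> \<tau> = transpose_mat (incB n m src dst) *\<^sub>v \<theta> \<tau>" using \<beta>_def by blast
    then show ?thesis using incB_carrier[of n m src dst]
      by (metis carrier_matD(2) carrier_vecI dim_mult_mat_vec index_transpose_mat(2))
  qed
  have beta_e: "\<beta> \<tau> $ e = \<theta> \<tau> $ src e - \<theta> \<tau> $ dst e" if "e < m" for \<tau> e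
  proof -
    have eq: "\<beta> \<tau> = transpose_mat (incB n m src dst) *\<^sub>v \<theta> \<tau>" using \<beta>_def by blast
    have ed: "src e < n" "dst e < n" using edges that by auto
    show ?thesis unfolding eq by (rule Bt_apply[of "\<theta> \<tau>" n e m src dst, OF spec[OF \<theta>_dim, of \<tau>] that ed])
  qed
  have ydim: "y \<tau> \<in> carrier_vec n" for \<tau>
  proof -
    have "y \<tau> = incD n m dst *\<^sub>v \<beta> \<tau>" using y_def by blast
    then show ?thesis using incD_carrier[of n m dst]
      by (metis carrier_matD(1) carrier_vecI dim_mult_mat_vec)
  qed
  have W: "\<omega> $ p + k * (y (t 1) $ p) = w" if p: "p < n" for p
  proof -
    have "(\<omega> + k \<cdot>\<^sub>v y (t 1)) $ p = (Wmat n z *\<^sub>v \<omega>) $ p" using init_y by simp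
    moreover have "dim_vec (y (t 1)) = n" using ydim[of "t 1"] by (rule carrier_vecD)
    moreover have "dim_vec \<omega> = n" using \<omega> by (rule carrier_vecD)
    ultimately show ?thesis using p
      by (simp add: Wmat_def scalar_prod_def row_def w_def lessThan_atLeast0)
  qed
  have integrand: "\<omega> $ p + c \<tau> p = w + (if p = i then k2 * sgn (b \<tau>) else 0)"
    if p: "p < n" and tau: "T0 \<le> \<tau>" "\<tau> < T" for p \<tau>
  proof -
    have nlt: "\<not> \<tau> < t 1" using t1T0 tau by auto
    show ?thesis
    proof (cases "p = i")
      case True
      have "c \<tau> i = k * (y (t 1) $ i) + k2 * sgn (\<beta> \<tau> $ g j)"
      proof -
        have act: "t j \<le> \<tau>" "\<tau> < t (Suc j)"
          using tau T0_def T_def by simp_all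
        show ?thesis using c_def[rule_format, OF i_n, of \<tau>]
          by (simp only: nlt act ji ir if_False if_True simp_thms)
      qed
      then show ?thesis using True W[OF i_n] b_def e0_def by simp
    next
      case False
      have "\<not> (p \<noteq> r \<and> t (jidx n dst g p) \<le> \<tau> \<and> \<tau> < t (Suc (jidx n dst g p)))"
      proof
        assume A: "p \<noteq> r \<and> t (jidx n dst g p) \<le> \<tau> \<and> \<tau> < t (Suc (jidx n dst g p))"
        define j' where "j' = jidx n dst g p"
        have j': "j' \<in> {1..<n}" "dst (g j') = p" using J2 p A j'_def by auto
        have "j' \<noteq> j" using j' False i_def e0_def by auto
        then consider "j' < j" | "j < j'" by linarith
        then show False
        proof cases
          case 1
          then have "t (Suc j') \<le> t j"
          proof (cases "Suc j' = j")
            case False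
            then have "Suc j' < j" using 1 by auto
            then show ?thesis using t_mono[OF t_inc, of "Suc j'" j] j by auto
          qed simp
          then show False using A j'_def tau T0_def by auto
        next
          case 2
          then have "t (Suc j) \<le> t j'"
          proof (cases "Suc j = j'")
            case False
            then have "Suc j < j'" using 2 by auto
            then show ?thesis using t_mono[OF t_inc, of "Suc j" j'] j' by auto
          qed simp
          then show False using A j'_def tau T_def by auto
        qed
      qed
      note na = this
      have "c \<tau> p = k * (y (t 1) $ p)"
        using c_def[rule_format, OF p, of \<tau>] by (simp only: nlt na if_False)
      then show ?thesis using False W[OF p] by simp
    qed
  qed
  have integ: "((\<lambda>\<tau>. w + (if p = i then k2 * sgn (b \<tau>) else 0)) has_integral (\<theta> s' $ p - \<theta> s $ p)) {s..s'}"
    if p: "p < n" and ss: "T0 \<le> s" "s \<le> s'" "s' \<le> T" for p s s'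
  proof (rule has_integral_spike_finite[of "{T}"])
    show "((\<lambda>\<tau>. \<omega> $ p + c \<tau> p) has_integral (\<theta> s' $ p - \<theta> s $ p)) {s..s'}"
      using dyn[rule_format, of s s' p] p ss t1T0 t_pos by linarith
  next
    fix x assume "x \<in> {s..s'} - {T}"
    then show "w + (if p = i then k2 * sgn (b x) else 0) = \<omega> $ p + c x p"
      using integrand[OF p, of x] ss by auto
  qed auto
  have other: "\<theta> s' $ p - \<theta> s $ p = w * (s' - s)"
    if p: "p < n" "p \<noteq> i" and ss: "T0 \<le> s" "s \<le> s'" "s' \<le> T" for p s s'
  proof -
    have "((\<lambda>\<tau>. w) has_integral (\<theta> s' $ p - \<theta> s $ p)) {s..s'}" using integ[OF p(1) ss] p(2) by simp
    from has_integral_unique[OF this const_int[OF ss(2), of w]] show ?thesis .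
  qed
  have act: "\<theta> s' $ i - \<theta> s $ i - w * (s' - s) = b s - b s'"
    if ss: "T0 \<le> s" "s \<le> s'" "s' \<le> T" for s s'
    using other[OF s0n is0[symmetric] ss] beta_e[OF e0m] b_def i_def s0_def by auto
  have bint: "((\<lambda>\<tau>. k2 * sgn (b \<tau>)) has_integral (b s - b s')) {s..s'}"
    if ss: "T0 \<le> s" "s \<le> s'" "s' \<le> T" for s s'
  proof -
    have "((\<lambda>\<tau>. (w + k2 * sgn (b \<tau>)) - w) has_integral (\<theta> s' $ i - \<theta> s $ i - w * (s' - s))) {s..s'}"
      by (rule has_integral_diff[OF _ const_int[OF ss(2)]]) (use integ[OF i_n ss] in simp)
    then show ?thesis using act[OF ss] by simp
  qed
  have gapj: "\<bar>b T0\<bar> < k2 * (T - T0)"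
    using gap j k2 b_def e0_def T0_def T_def by (auto simp: pos_divide_less_eq mult.commute)
  have bT: "b T = 0" by (rule sgn_ode_zero[OF k2 TT gapj bint]) auto
  have thT: "\<theta> T $ p = \<theta> T0 $ p + w * (T - T0) + (if p = i then b T0 else 0)" if p: "p < n" for p
  proof (cases "p = i")
    case True then show ?thesis using act[of T0 T] TT bT by auto
  next
    case False then show ?thesis using other[OF p False, of T0 T] TT by auto
  qed
  have eq: "\<beta> T = (1\<^sub>m m + transpose_mat (incB n m src dst) * incD n m dst * Emat m e0) *\<^sub>v \<beta> T0"
  proof (rule eq_vecI)
    fix e assume "e < dim_vec ((1\<^sub>m m + transpose_mat (incB n m src dst) * incD n m dst * Emat m e0) *\<^sub>v \<beta> T0)"
    then have "e < dim_col (incB n m src dst)" by simp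
    then have e: "e < m" using incB_carrier[of n m src dst] by (metis carrier_matD(2))
    have se: "src e < n" and de: "dst e < n" using edges e by auto
    show "\<beta> T $ e = ((1\<^sub>m m + transpose_mat (incB n m src dst) * incD n m dst * Emat m e0) *\<^sub>v \<beta> T0) $ e"
      using step_apply[where v="\<beta> T0" and m=m and e=e and g=e0 and src=src and dst=dst and n=n, OF bdim e e0m se de i_n[unfolded i_def]] beta_e[OF e] thT[OF se] thT[OF de]
      by (simp add: i_def b_def)
  next
    have d1: "dim_vec (\<beta> T) = m" using bdim[of T] by (rule carrier_vecD)
    have d2: "dim_col (incB n m src dst) = m" using incB_carrier[of n m src dst] by (rule carrier_matD)
    show "dim_vec (\<beta> T) = dim_vec ((1\<^sub>m m + transpose_mat (incB n m src dst) * incD n m dst * Emat m e0) *\<^sub>v \<beta> T0)"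
      by (simp add: d1 d2)
  qed
  show "\<beta> (t (Suc j)) = (1\<^sub>m m + transpose_mat (incB n m src dst) * incD n m dst * Emat m (g j)) *\<^sub>v \<beta> (t j)
     \<and> \<beta> (t (Suc j)) $ g j = 0"
    using eq bT unfolding T_def T0_def e0_def b_def by simp
qed
end
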